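(* Let $n\ge2$, $1\le t\le n-1$, and let $a,b,c,d,e>0$. Consider the continuous-time Markov chain on the set of words $u=u_1\cdots u_n\in\{1,0,\bar1\}^n$ having exactly $t$ nonzero letters, with the following transitions: for $1\le i<n$, a factor $u_iu_{i+1}$ equal to $01$ becomes $10$ at rate $a$, a factor $\bar11$ becomes $1\bar1$ at rate $b$, a factor $\bar10$ becomes $0\bar1$ at rate $c$; if $u_n=\bar1$ it becomes $1$ at rate $d$; if $u_1=1$ it becomes $\bar1$ at rate $e$. Then the stationary distribution of this chain at a word $u$ is proportional to $[u]$ evaluated at these values of $a,b,c,d,e$. In particular (for $(a,b,c,d,e)$ proportional to $(2,2,2,1,1)$) this describes the stationary distribution $\pi_J$ of the type C chain $\Theta_J$ with $J=[n]\setminus\{t\}$, under the encoding of a state by the word with $u_j=1$ if column $j$ has a particle in the upper row, $u_j=\bar1$ if in the lower row, $u_j=0$ if column $j$ is empty.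
   Context: Words are finite sequences over $\{1,0,\bar1\}$ ($\bar1=-1$). For every word $u$, $[u]$ is the Laurent polynomial in indeterminates $a,b,c,d,e$ determined uniquely by the recursions, valid for all (possibly empty) words $v,w$: $[v01w]=[v0w]/a$, $[v\bar11w]=([v\bar1w]+[v1w])/b$, $[v\bar10w]=[v0w]/c$, $[v\bar1]=[v]/d$, $[1v]=[v]/e$, and $[u]=1$ whenever $u$ consists only of $0$'s (including the empty word). Type C chain $\Theta_J$ for $J=[n]\setminus\{t\}$: states are placements of $t$ indistinguishable particles in a $2\times n$ array (upper row, lower row), at most one per column. The dynamics, in word encoding, is exactly the chain above with rates $(a,b,c,d,e)=(2,2,2,1,1)$: an upper particle moves left into an empty column or across a lower particle in the adjacent column, a lower particle moves right, and at the ends an upper particle in column $1$ drops to the lower row and a lower particle in column $n$ rises to the upper row. *)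

theory Defs
  imports Complex_Main
begin

text \<open>Words over {1,0,-1} are int lists; letter -1 is written as bar 1.\<close>

definition del_at :: "nat \<Rightarrow> int list \<Rightarrow> int list" where
  "del_at i u = take i u @ drop (Suc i) u"

definition red_pos :: "int list \<Rightarrow> nat \<Rightarrow> bool" where
  "red_pos u i \<longleftrightarrow> Suc i < length u \<and>
     (u ! i, u ! Suc i) \<in> {(0, 1), (-1, 1), (-1, 0)}"

definition first_red :: "int list \<Rightarrow> nat" where
  "first_red u = (LEAST i. red_pos u i)"

lemma first_red_len: "\<exists>i. red_pos u i \<Longrightarrow> Suc (first_red u) < length u"
  unfolding first_red_def by (metis (mono_tags, lifting) LeastI red_pos_def)

text \<open>The bracket [u] evaluated at a,b,c,d,e, computed by applying the defining
  recursions (leftmost applicable factor rule); the paper asserts the recursions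
  determine [u] uniquely.\<close>

function bracket :: "real \<Rightarrow> real \<Rightarrow> real \<Rightarrow> real \<Rightarrow> real \<Rightarrow> int list \<Rightarrow> real" where
  "bracket a b c d e u =
    (if (\<forall>x\<in>set u. x = 0) then 1
     else if hd u = 1 then bracket a b c d e (tl u) / e
     else if last u = -1 then bracket a b c d e (butlast u) / d
     else if (\<exists>i. red_pos u i) then
       (if u ! first_red u = 0 then bracket a b c d e (del_at (Suc (first_red u)) u) / a
        else if u ! Suc (first_red u) = 1 then
          (bracket a b c d e (del_at (Suc (first_red u)) u)
           + bracket a b c d e (del_at (first_red u) u)) / b
        else bracket a b c d e (del_at (first_red u) u) / c)
     else 0)"
  by pat_completeness auto
termination
  apply (relation "measure (\<lambda>(a,b,c,d,e,u). length u)")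
  apply (auto simp: del_at_def dest!: first_red_len)
  apply (metis empty_iff length_pos_if_in_set diff_less zero_less_one One_nat_def)+
  done

definition rate :: "real \<Rightarrow> real \<Rightarrow> real \<Rightarrow> real \<Rightarrow> real \<Rightarrow> int list \<Rightarrow> int list \<Rightarrow> real" where
  "rate a b c d e u v =
    (\<Sum>i<length u - 1.
        (if u ! i = 0 \<and> u ! Suc i = 1 \<and> v = u[i := 1, Suc i := 0] then a else 0)
      + (if u ! i = -1 \<and> u ! Suc i = 1 \<and> v = u[i := 1, Suc i := -1] then b else 0)
      + (if u ! i = -1 \<and> u ! Suc i = 0 \<and> v = u[i := 0, Suc i := -1] then c else 0))
    + (if u \<noteq> [] \<and> last u = -1 \<and> v = butlast u @ [1] then d else 0)
    + (if u \<noteq> [] \<and> hd u = 1 \<and> v = -1 # tl u then e else 0)"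

definition states :: "nat \<Rightarrow> nat \<Rightarrow> int list set" where
  "states n t = {u. length u = n \<and> set u \<subseteq> {-1, 0, 1} \<and> length (filter (\<lambda>x. x \<noteq> 0) u) = t}"

definition stationary :: "int list set \<Rightarrow> (int list \<Rightarrow> int list \<Rightarrow> real) \<Rightarrow> (int list \<Rightarrow> real) \<Rightarrow> bool" where
  "stationary S r p \<longleftrightarrow>
     (\<forall>u\<in>S. p u \<ge> 0) \<and> (\<Sum>u\<in>S. p u) = 1 \<and>
     (\<forall>u\<in>S. (\<Sum>v\<in>S - {u}. p v * r v u) = p u * (\<Sum>v\<in>S - {u}. r u v))"

end

theory Submission
  imports Defs
begin

context fixes a b c d e :: real begin

primrec oneval :: "(bool \<Rightarrow> nat \<Rightarrow> real) \<Rightarrow> bool \<Rightarrow> nat \<Rightarrow> real" where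
  "oneval g z 0 = (if z then 1/a else 1/e) * g z 0"
| "oneval g z (Suc k) = (g z (Suc k) + oneval g z k) / b"

primrec G :: "int list \<Rightarrow> bool \<Rightarrow> nat \<Rightarrow> real" where
  "G [] = (\<lambda>z k. 1 / d^k)"
| "G (x#w) = (\<lambda>z k. if x = 0 then G w True 0 / c^k
      else if x = -1 then G w z (Suc k) else oneval (G w) z k)"

definition F :: "int list \<Rightarrow> real" where "F u = G u False 0"

lemma oneval_lin:
  assumes "\<And>z k. g1 z k = \<alpha> * g2 z k + \<beta> * g3 z k"
  shows "oneval g1 z k = \<alpha> * oneval g2 z k + \<beta> * oneval g3 z k"
  by (induction k) (simp_all add: assms algebra_simps add_divide_distrib)

lemma G_lin:
  assumes "\<And>z k. G w1 z k = \<alpha> * G w2 z k + \<beta> * G w3 z k"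
  shows "G (v @ w1) z k = \<alpha> * G (v @ w2) z k + \<beta> * G (v @ w3) z k"
proof (induction v arbitrary: z k)
  case Nil then show ?case using assms by simp
next
  case (Cons x v)
  show ?case
  proof (cases "x = 0")
    case True then show ?thesis using Cons by (simp add: add_divide_distrib)
  next
    case False
    then show ?thesis using Cons by (simp add: oneval_lin)
  qed
qed

lemma F_a: "a \<noteq> 0 \<Longrightarrow> F (v @ 0 # 1 # w) = F (v @ 0 # w) / a"
proof -
  have "G (v @ (0 # 1 # w)) False 0 = (1/a) * G (v @ (0 # w)) False 0 + 0 * G (v @ w) False 0"
    by (rule G_lin) simp
  then show ?thesis by (simp add: F_def)
qed

lemma F_b: "F (v @ -1 # 1 # w) = (F (v @ -1 # w) + F (v @ 1 # w)) / b"
proof -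
  have "G (v @ (-1 # 1 # w)) False 0 = (1/b) * G (v @ (-1 # w)) False 0 + (1/b) * G (v @ (1 # w)) False 0"
    by (rule G_lin) (simp add: add_divide_distrib)
  then show ?thesis by (simp add: F_def add_divide_distrib)
qed

lemma F_c: "F (v @ -1 # 0 # w) = F (v @ 0 # w) / c"
proof -
  have "G (v @ (-1 # 0 # w)) False 0 = (1/c) * G (v @ (0 # w)) False 0 + 0 * G (v @ w) False 0"
    by (rule G_lin) simp
  then show ?thesis by (simp add: F_def)
qed

lemma F_d: "F (v @ [-1]) = F v / d"
proof -
  have "G (v @ [-1]) False 0 = (1/d) * G (v @ []) False 0 + 0 * G (v @ []) False 0"
    by (rule G_lin) simp
  then show ?thesis by (simp add: F_def)
qed

lemma F_e: "F (1 # w) = F w / e"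
  by (simp add: F_def)

lemma G_zeros: "G (replicate m 0) z 0 = 1"
  by (induction m arbitrary: z) auto

lemma F_zeros: "\<forall>x\<in>set u. x = 0 \<Longrightarrow> F u = 1"
proof -
  assume "\<forall>x\<in>set u. x = 0"
  then have "u = replicate (length u) 0" by (simp add: list_eq_iff_nth_eq)
  then show ?thesis by (metis F_def G_zeros)
qed

lemma oneval_pos: "0 < a \<Longrightarrow> 0 < b \<Longrightarrow> 0 < e \<Longrightarrow> (\<And>z k. g z k > 0) \<Longrightarrow> oneval g z k > 0"
  by (induction k) (auto intro!: divide_pos_pos add_pos_pos)

lemma G_pos: "0 < a \<Longrightarrow> 0 < b \<Longrightarrow> 0 < c \<Longrightarrow> 0 < d \<Longrightarrow> 0 < e \<Longrightarrow> G w z k > 0"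
  by (induction w arbitrary: z k) (auto intro!: oneval_pos)

lemma F_pos: "0 < a \<Longrightarrow> 0 < b \<Longrightarrow> 0 < c \<Longrightarrow> 0 < d \<Longrightarrow> 0 < e \<Longrightarrow> F w > 0"
  by (simp add: F_def G_pos)

end

declare bracket.simps[simp del]

lemma red_pos_Cons_Suc: "red_pos (x # w) (Suc i) = red_pos w i"
  by (simp add: red_pos_def)

lemma red_pos_Cons_0: "red_pos (x # y # w) 0 = ((x, y) \<in> {(0, 1), (-1, 1), (-1, 0)})"
  by (simp add: red_pos_def)

lemma no_red_form:
  "set u \<subseteq> {-1,0,1} \<Longrightarrow> \<not>(\<exists>i. red_pos u i) \<Longrightarrow> (u \<noteq> [] \<longrightarrow> last u \<noteq> -1)
   \<Longrightarrow> \<exists>k m. u = replicate k 1 @ replicate m 0"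
proof (induction u)
  case Nil then show ?case by simp
next
  case (Cons x w)
  have nw: "\<not>(\<exists>i. red_pos w i)" using Cons.prems(2) red_pos_Cons_Suc by blast
  have lw: "w \<noteq> [] \<longrightarrow> last w \<noteq> -1" using Cons.prems(3) by auto
  obtain k m where w: "w = replicate k 1 @ replicate m 0" using Cons.IH Cons.prems(1) nw lw by auto
  have x: "x = -1 \<or> x = 0 \<or> x = 1" using Cons.prems(1) by auto
  show ?case
  proof (cases "x = 1")
    case True then show ?thesis using w by (metis replicate_Suc append_Cons)
  next
    case False
    show ?thesis
    proof (cases w)
      case Nil
      then show ?thesis using Cons.prems(3) False x by (metis append_Nil last_ConsL list.distinct(1) replicate_0 replicate_Suc)
    next
      case (Cons y w')
      have "y = 1 \<or> y = 0" using w Cons by (cases k; cases m) auto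
      then have xy: "x = 0 \<and> y = 0"
        using Cons.prems(2) red_pos_Cons_0[of x y w'] Cons x False \<open>w = y # w'\<close> by auto
      then have "k = 0" using w \<open>w = y # w'\<close> by (cases k) auto
      then show ?thesis using w xy by (intro exI[of _ 0] exI[of _ "Suc m"]) simp
    qed
  qed
qed

lemma split2: "Suc i < length u \<Longrightarrow> u = take i u @ u ! i # u ! Suc i # drop (Suc (Suc i)) u"
  by (metis Cons_nth_drop_Suc Suc_lessD append_take_drop_id)

lemma del_Suc: "Suc i < length u \<Longrightarrow> del_at (Suc i) u = take i u @ u ! i # drop (Suc (Suc i)) u"
  by (simp add: del_at_def take_Suc_conv_app_nth)

lemma del_i: "Suc i < length u \<Longrightarrow> del_at i u = take i u @ u ! Suc i # drop (Suc (Suc i)) u"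
  by (simp add: del_at_def Cons_nth_drop_Suc)

lemma set_del: "set (del_at i u) \<subseteq> set u"
  unfolding del_at_def using set_take_subset set_drop_subset by fastforce

lemma len_del: "i < length u \<Longrightarrow> length (del_at i u) < length u"
  unfolding del_at_def by simp

lemma br_zero: "\<forall>x\<in>set u. x = 0 \<Longrightarrow> bracket a b c d e u = 1"
  by (subst bracket.simps) simp
lemma br_hd: assumes "\<not>(\<forall>x\<in>set u. x = 0)" "hd u = 1" shows "bracket a b c d e u = bracket a b c d e (tl u) / e"
  by (rule trans[OF bracket.simps]) (simp only: assms if_False if_True simp_thms)
lemma br_last: assumes "\<not>(\<forall>x\<in>set u. x = 0)" "hd u \<noteq> 1" "last u = -1" shows "bracket a b c d e u = bracket a b c d e (butlast u) / d"
  by (rule trans[OF bracket.simps]) (simp only: assms if_False if_True simp_thms)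
lemma br_none: assumes "\<not>(\<forall>x\<in>set u. x = 0)" "hd u \<noteq> 1" "last u \<noteq> -1" "\<not>(\<exists>i. red_pos u i)" shows "bracket a b c d e u = 0"
  by (rule trans[OF bracket.simps]) (simp only: assms if_False if_True simp_thms)
lemma br_red: assumes "\<not>(\<forall>x\<in>set u. x = 0)" "hd u \<noteq> 1" "last u \<noteq> -1" "(\<exists>i. red_pos u i)" "i = first_red u" shows "
  bracket a b c d e u = (if u ! i = 0 then bracket a b c d e (del_at (Suc i) u) / a
              else if u ! Suc i = 1 then
                (bracket a b c d e (del_at (Suc i) u) + bracket a b c d e (del_at i u)) / b
              else bracket a b c d e (del_at i u) / c)"
  by (rule trans[OF bracket.simps]) (simp only: assms if_False if_True simp_thms)

lemma bracket_F:
  assumes pos: "0 < a" "0 < b" "0 < c" "0 < d" "0 < e"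
  shows "set u \<subseteq> {-1,0,1} \<Longrightarrow> bracket a b c d e u = F a b c d e u"
proof (induction "length u" arbitrary: u rule: less_induct)
  case less
  note IH = less.hyps[OF _ order.trans[OF set_del less.prems]]
  show ?case
  proof (cases "\<forall>x\<in>set u. x = 0")
    case True then show ?thesis by (simp add: F_zeros br_zero)
  next
    case nz: False
    then have une: "u \<noteq> []" by auto
    show ?thesis
    proof (cases "hd u = 1")
      case True
      then have u: "u = 1 # tl u" using une by (cases u) auto
      have "set (tl u) \<subseteq> {-1,0,1}" using less.prems une by (cases u) auto
      then have "bracket a b c d e (tl u) = F a b c d e (tl u)"
        using less.hyps[of "tl u"] une by simp
      moreover have "F a b c d e u = F a b c d e (tl u) / e" by (subst u) (rule F_e)
      ultimately show ?thesis using br_hd[OF nz True] by simp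
    next
      case h1: False
      show ?thesis
      proof (cases "last u = -1")
        case True
        then have u: "u = butlast u @ [-1]" using une append_butlast_last_id[of u] by simp
        have "set (butlast u) \<subseteq> {-1,0,1}" using less.prems in_set_butlastD by (metis subset_code(1))
        then have "bracket a b c d e (butlast u) = F a b c d e (butlast u)"
          using less.hyps[of "butlast u"] une by simp
        moreover have "F a b c d e u = F a b c d e (butlast u) / d"
          using F_d[of a b c d e "butlast u"] by (simp only: u[symmetric])
        ultimately show ?thesis using br_last[OF nz h1 True] by simp
      next
        case l1: False
        show ?thesis
        proof (cases "\<exists>i. red_pos u i")
          case False
          obtain k m where "u = replicate k 1 @ replicate m 0"
            using no_red_form[OF less.prems False] l1 by auto
          then show ?thesis using h1 nz by (cases k) auto
        next
          case True
          define i where "i = first_red u"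
          have rp: "red_pos u i" unfolding i_def first_red_def by (rule LeastI_ex[OF True])
          then have si: "Suc i < length u" by (simp add: red_pos_def)
          have pair: "(u ! i, u ! Suc i) \<in> {(0, 1), (-1, 1), (-1, 0)}" using rp by (simp add: red_pos_def)
          have IH1: "bracket a b c d e (del_at (Suc i) u) = F a b c d e (del_at (Suc i) u)"
            using IH len_del si by blast
          have IH2: "bracket a b c d e (del_at i u) = F a b c d e (del_at i u)"
            using IH len_del si by (meson Suc_lessD)
          note br = br_red[OF nz h1 l1 True i_def, of a b c d e]
          have uu: "u = take i u @ u ! i # u ! Suc i # drop (Suc (Suc i)) u" using split2 si by blast
          show ?thesis
          proof (cases "u ! i = 0")
            case True
            then have "u ! Suc i = 1" using pair by auto
            then have eq: "u = take i u @ 0 # 1 # drop (Suc (Suc i)) u" using uu True by simp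
            have "F a b c d e u = F a b c d e (take i u @ 0 # drop (Suc (Suc i)) u) / a"
              using F_a[of a b c d e "take i u" "drop (Suc (Suc i)) u"] pos by (simp only: eq[symmetric] less_irrefl not_False_eq_True simp_thms)
            also have "take i u @ 0 # drop (Suc (Suc i)) u = del_at (Suc i) u" using del_Suc[OF si] True by simp
            finally show ?thesis using br IH1 True by simp
          next
            case False
            then have m1: "u ! i = -1" using pair by auto
            show ?thesis
            proof (cases "u ! Suc i = 1")
              case True
              then have eq: "u = take i u @ -1 # 1 # drop (Suc (Suc i)) u" using uu m1 by simp
              have "F a b c d e u = (F a b c d e (take i u @ -1 # drop (Suc (Suc i)) u) + F a b c d e (take i u @ 1 # drop (Suc (Suc i)) u)) / b"
                using F_b[of a b c d e "take i u" "drop (Suc (Suc i)) u"] by (simp only: eq[symmetric])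
              also have "take i u @ -1 # drop (Suc (Suc i)) u = del_at (Suc i) u" using del_Suc[OF si] m1 by simp
              also have "take i u @ 1 # drop (Suc (Suc i)) u = del_at i u" using del_i[OF si] True by simp
              finally show ?thesis using br IH1 IH2 True False by simp
            next
              case f2: False
              then have "u ! Suc i = 0" using pair m1 by auto
              then have eq: "u = take i u @ -1 # 0 # drop (Suc (Suc i)) u" using uu m1 by simp
              have "F a b c d e u = F a b c d e (take i u @ 0 # drop (Suc (Suc i)) u) / c"
                using F_c[of a b c d e "take i u" "drop (Suc (Suc i)) u"] by (simp only: eq[symmetric])
              also have "take i u @ 0 # drop (Suc (Suc i)) u = del_at i u" using del_i[OF si] \<open>u ! Suc i = 0\<close> by simp
              finally show ?thesis using br IH2 f2 False by simp
            qed
          qed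
        qed
      qed
    qed
  qed
qed

lemma len_filter_upd: "i < length xs \<Longrightarrow>
  length (filter P (xs[i:=x])) + (if P (xs!i) then 1 else 0) = length (filter P xs) + (if P x then 1 else 0)"
proof (induction xs arbitrary: i)
  case Nil then show ?case by simp
next
  case (Cons y xs) then show ?case by (cases i) auto
qed

lemma states_upd1:
  assumes "u \<in> states n t" "i < n" "x \<noteq> 0" "u ! i \<noteq> 0" "x \<in> {-1,0,1}"
  shows "u[i := x] \<in> states n t"
proof -
  have l: "length u = n" "set u \<subseteq> {-1,0,1}" "length (filter (\<lambda>x. x \<noteq> 0) u) = t"
    using assms(1) by (auto simp: states_def)
  have "length (filter (\<lambda>x. x \<noteq> 0) (u[i:=x])) = t"
    using len_filter_upd[of i u "\<lambda>x. x \<noteq> 0" x] l assms by simp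
  moreover have "set (u[i:=x]) \<subseteq> {-1,0,1}" using set_update_subset_insert[of u i x] l assms by auto
  ultimately show ?thesis using l by (simp add: states_def)
qed

lemma states_swap:
  assumes "u \<in> states n t" "Suc i < n"
  shows "u[i := u ! Suc i, Suc i := u ! i] \<in> states n t"
proof -
  have l: "length u = n" "set u \<subseteq> {-1,0,1}" "length (filter (\<lambda>x. x \<noteq> 0) u) = t"
    using assms(1) by (auto simp: states_def)
  define P where "P = (\<lambda>x::int. x \<noteq> 0)"
  have h1: "length (filter P (u[i:=u ! Suc i])) + (if P (u!i) then 1 else 0) = length (filter P u) + (if P (u ! Suc i) then 1 else 0)"
    using len_filter_upd[of i u P] l assms by simp
  have h2: "length (filter P (u[i:=u ! Suc i, Suc i := u ! i])) + (if P (u ! Suc i) then 1 else 0) = length (filter P (u[i:=u ! Suc i])) + (if P (u ! i) then 1 else 0)"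
    using len_filter_upd[of "Suc i" "u[i:=u ! Suc i]" P "u ! i"] l assms by simp
  have "length (filter P (u[i:=u ! Suc i, Suc i := u ! i])) = t" using h1 h2 l P_def by simp
  moreover have "set (u[i:=u ! Suc i, Suc i := u ! i]) \<subseteq> {-1,0,1}"
  proof -
    have m1: "u ! i \<in> set u" "u ! Suc i \<in> set u" using l assms by auto
    have "set (u[i:=u ! Suc i]) \<subseteq> set u" using set_update_subset_insert[of u i "u ! Suc i"] m1 by blast
    moreover have "set (u[i:=u ! Suc i, Suc i := u ! i]) \<subseteq> insert (u ! i) (set (u[i:=u ! Suc i]))"
      by (rule set_update_subset_insert)
    ultimately show ?thesis using m1 l by blast
  qed
  ultimately show ?thesis using l P_def by (simp add: states_def)
qed

lemma butlast_upd: "u \<noteq> [] \<Longrightarrow> butlast u @ [x] = u[length u - 1 := x]"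
proof -
  assume "u \<noteq> []"
  then have "u = butlast u @ [last u]" by simp
  then have "u[length u - 1 := x] = (butlast u @ [last u])[length (butlast u) := x]" by simp
  also have "\<dots> = butlast u @ [x]" by (rule list_update_length)
  finally show ?thesis by simp
qed

lemma tl_upd: "u \<noteq> [] \<Longrightarrow> x # tl u = u[0 := x]"
  by (cases u) auto

lemma iff2:
  assumes "length v = length u" "Suc i < length u"
  shows "(v!i = p \<and> v!Suc i = q \<and> u = v[i:=p', Suc i:=q']) \<longleftrightarrow> (u!i = p' \<and> u!Suc i = q' \<and> v = u[i:=p, Suc i:=q])"
proof
  assume h: "v!i = p \<and> v!Suc i = q \<and> u = v[i:=p', Suc i:=q']"
  have "u[i:=p, Suc i:=q] = v"
    using h assms by (intro nth_equalityI) (auto simp: nth_list_update)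
  then show "u!i = p' \<and> u!Suc i = q' \<and> v = u[i:=p, Suc i:=q]" using h assms by simp
next
  assume h: "u!i = p' \<and> u!Suc i = q' \<and> v = u[i:=p, Suc i:=q]"
  have "v[i:=p', Suc i:=q'] = u"
    using h assms by (intro nth_equalityI) (auto simp: nth_list_update)
  then show "v!i = p \<and> v!Suc i = q \<and> u = v[i:=p', Suc i:=q']" using h assms by simp
qed

lemma iff1:
  assumes "length v = length u" "j < length u"
  shows "(v!j = p \<and> u = v[j:=p']) \<longleftrightarrow> (u!j = p' \<and> v = u[j:=p])"
proof
  assume h: "v!j = p \<and> u = v[j:=p']"
  have "u[j:=p] = v"
    using h assms by (intro nth_equalityI) (auto simp: nth_list_update)
  then show "u!j = p' \<and> v = u[j:=p]" using h assms by simp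
next
  assume h: "u!j = p' \<and> v = u[j:=p]"
  have "v[j:=p'] = u"
    using h assms by (intro nth_equalityI) (auto simp: nth_list_update)
  then show "v!j = p \<and> u = v[j:=p']" using h assms by simp
qed
lemma rate_alt:
  assumes "length u = n" "n \<ge> 1"
  shows "rate a b c d e u v =
    (\<Sum>i<n - 1.
        (if u ! i = 0 \<and> u ! Suc i = 1 \<and> v = u[i := 1, Suc i := 0] then a else 0)
      + (if u ! i = -1 \<and> u ! Suc i = 1 \<and> v = u[i := 1, Suc i := -1] then b else 0)
      + (if u ! i = -1 \<and> u ! Suc i = 0 \<and> v = u[i := 0, Suc i := -1] then c else 0))
    + (if u ! (n - 1) = -1 \<and> v = u[n - 1 := 1] then d else 0)
    + (if u ! 0 = 1 \<and> v = u[0 := -1] then e else 0)"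
proof -
  have ne: "u \<noteq> []" using assms by auto
  show ?thesis unfolding rate_def
    using ne assms by (simp add: butlast_upd tl_upd last_conv_nth hd_conv_nth)
qed

lemma sum_delta_cond:
  fixes f :: "'a \<Rightarrow> real"
  assumes "finite A" "P \<Longrightarrow> w \<in> A"
  shows "(\<Sum>v\<in>A. f v * (if P \<and> v = w then r else 0)) = (if P then f w * r else 0)"
proof (cases P)
  case True
  have "(\<Sum>v\<in>A. f v * (if P \<and> v = w then r else 0)) = (\<Sum>v\<in>A. if v = w then f v * r else 0)"
    using True by (intro sum.cong) auto
  also have "\<dots> = f w * r" using assms True by simp
  finally show ?thesis using True by simp
qed simp

lemma sum_delta_cond1:
  fixes r :: real
  assumes "finite A" "P \<Longrightarrow> w \<in> A"
  shows "(\<Sum>v\<in>A. (if P \<and> v = w then r else 0)) = (if P then r else 0)"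
  using sum_delta_cond[of A P w "\<lambda>_. 1" r] assms by simp

lemma finite_states: "finite (states n t)"
proof -
  have "states n t \<subseteq> {xs. set xs \<subseteq> {-1,0,1} \<and> length xs = n}" by (auto simp: states_def)
  moreover have "finite {xs. set xs \<subseteq> ({-1,0,1}::int set) \<and> length xs = n}"
    by (rule finite_lists_length_eq) simp
  ultimately show ?thesis by (rule finite_subset)
qed

lemma upd2: "Suc i < length u \<Longrightarrow> u[i:=p, Suc i:=q] = take i u @ p # q # drop (Suc (Suc i)) u"
proof -
  assume si: "Suc i < length u"
  have "u[i:=p, Suc i:=q] = (take i u @ u ! i # u ! Suc i # drop (Suc (Suc i)) u)[i:=p, Suc i:=q]"
    using split2[OF si] by simp
  also have "\<dots> = take i u @ p # q # drop (Suc (Suc i)) u"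
    using si by (simp add: list_update_append)
  finally show ?thesis .
qed

context fixes a b c d e :: real
  assumes pos: "0 < a" "0 < b" "0 < c" "0 < d" "0 < e"
begin

lemma bond:
  assumes "x \<in> {-1,0,1}" "y \<in> {-1,0,1}"
  shows "(if x=1 \<and> y=0 then F a b c d e (L@0#1#R)*a else 0) + (if x=1 \<and> y=-1 then F a b c d e (L@-1#1#R)*b else 0)
     + (if x=0 \<and> y=-1 then F a b c d e (L@-1#0#R)*c else 0)
     - F a b c d e (L@x#y#R) * ((if x=0 \<and> y=1 then a else 0) + (if x=-1 \<and> y=1 then b else 0) + (if x=-1 \<and> y=0 then c else 0))
     = of_int x * F a b c d e (L@y#R) - of_int y * F a b c d e (L@x#R)"
  using assms pos by (auto simp: F_a F_b F_c)

lemma bnd_e: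
  assumes "x \<in> {-1,0,1}"
  shows "(if x = -1 then F a b c d e (1#R)*e else 0) - F a b c d e (x#R) * (if x=1 then e else 0) = - (of_int x * F a b c d e R)"
  using assms pos by (auto simp: F_e)

lemma bnd_d:
  assumes "x \<in> {-1,0,1}"
  shows "(if x = 1 then F a b c d e (L@[-1])*d else 0) - F a b c d e (L@[x]) * (if x=-1 then d else 0) = of_int x * F a b c d e L"
  using assms pos by (auto simp: F_d)


lemma balance_F:
  assumes u: "u \<in> states n t" and n1: "1 \<le> n"
  defines "g \<equiv> \<lambda>j. of_int (u ! j) * F a b c d e (del_at j u)"
  shows "(\<Sum>i<n-1. (if u!i=1 \<and> u!Suc i=0 then F a b c d e (u[i:=0,Suc i:=1])*a else 0)
                 + (if u!i=1 \<and> u!Suc i=-1 then F a b c d e (u[i:=-1,Suc i:=1])*b else 0)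
                 + (if u!i=0 \<and> u!Suc i=-1 then F a b c d e (u[i:=-1,Suc i:=0])*c else 0))
         + (if u!(n-1) = 1 then F a b c d e (u[n-1:=-1])*d else 0)
         + (if u!0 = -1 then F a b c d e (u[0:=1])*e else 0)
       = F a b c d e u * ((\<Sum>i<n-1. (if u!i=0 \<and> u!Suc i=1 then a else 0)
                 + (if u!i=-1 \<and> u!Suc i=1 then b else 0)
                 + (if u!i=-1 \<and> u!Suc i=0 then c else 0))
         + (if u!(n-1) = -1 then d else 0)
         + (if u!0 = 1 then e else 0))"
    (is "?IN = F a b c d e u * ?OUT")
proof -
  have lu: "length u = n" and su: "set u \<subseteq> {-1,0,1}" using u by (auto simp: states_def)
  have let3: "\<And>j. j < n \<Longrightarrow> u ! j \<in> {-1,0,1}" using su lu nth_mem by blast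
  have bi: "(if u!i=1 \<and> u!Suc i=0 then F a b c d e (u[i:=0,Suc i:=1])*a else 0)
                 + (if u!i=1 \<and> u!Suc i=-1 then F a b c d e (u[i:=-1,Suc i:=1])*b else 0)
                 + (if u!i=0 \<and> u!Suc i=-1 then F a b c d e (u[i:=-1,Suc i:=0])*c else 0)
            - F a b c d e u * ((if u!i=0 \<and> u!Suc i=1 then a else 0)
                 + (if u!i=-1 \<and> u!Suc i=1 then b else 0)
                 + (if u!i=-1 \<and> u!Suc i=0 then c else 0)) = g i - g (Suc i)" if "i < n - 1" for i
  proof -
    have si: "Suc i < length u" using that lu by simp
    define L where "L = take i u"
    define R where "R = drop (Suc (Suc i)) u"
    have uu: "u = L @ u!i # u!Suc i # R" using split2[OF si] L_def R_def by simp
    have up: "\<And>p q. u[i:=p, Suc i:=q] = L @ p # q # R" using upd2[OF si] L_def R_def by simp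
    have d1: "del_at i u = L @ u ! Suc i # R" using del_i[OF si] L_def R_def by simp
    have d2: "del_at (Suc i) u = L @ u ! i # R" using del_Suc[OF si] L_def R_def by simp
    have "F a b c d e u = F a b c d e (L @ u!i # u!Suc i # R)" using uu by simp
    then show ?thesis unfolding g_def up d1 d2
      using bond[of "u!i" "u!Suc i" L R] let3 si lu by simp
  qed
  have be: "(if u!0 = -1 then F a b c d e (u[0:=1])*e else 0) - F a b c d e u * (if u!0 = 1 then e else 0) = - g 0"
  proof -
    have ne: "u \<noteq> []" using lu n1 by auto
    have uu: "u = u!0 # tl u" using ne by (cases u) auto
    have e1: "u[0:=1] = 1 # tl u" using ne by (cases u) auto
    have e2: "del_at 0 u = tl u" by (simp add: del_at_def drop_Suc)
    have e3: "F a b c d e u = F a b c d e (u!0 # tl u)" using uu by simp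
    have "u ! 0 \<in> {-1,0,1}" using let3 n1 by simp
    then show ?thesis unfolding g_def by (simp only: e1 e2 e3) (rule bnd_e)
  qed
  have bd: "(if u!(n-1) = 1 then F a b c d e (u[n-1:=-1])*d else 0) - F a b c d e u * (if u!(n-1) = -1 then d else 0) = g (n-1)"
  proof -
    have ne: "u \<noteq> []" using lu n1 by auto
    have uu: "u = butlast u @ [u!(n-1)]" using ne lu by (metis append_butlast_last_id last_conv_nth)
    have e1: "u[n-1:=-1] = butlast u @ [-1]" using butlast_upd[OF ne] lu by simp
    have e2: "del_at (n-1) u = butlast u" using lu by (simp add: del_at_def butlast_conv_take)
    have e3: "F a b c d e u = F a b c d e (butlast u @ [u!(n-1)])" using uu by simp
    have "u ! (n-1) \<in> {-1,0,1}" using let3 n1 by simp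
    then show ?thesis unfolding g_def by (simp only: e1 e2 e3) (rule bnd_d)
  qed
  define INb where "INb = (\<lambda>i. (if u!i=1 \<and> u!Suc i=0 then F a b c d e (u[i:=0,Suc i:=1])*a else 0)
                 + (if u!i=1 \<and> u!Suc i=-1 then F a b c d e (u[i:=-1,Suc i:=1])*b else 0)
                 + (if u!i=0 \<and> u!Suc i=-1 then F a b c d e (u[i:=-1,Suc i:=0])*c else 0))"
  define OUTb where "OUTb = (\<lambda>i. (if u!i=0 \<and> u!Suc i=1 then a else 0)
                 + (if u!i=-1 \<and> u!Suc i=1 then b else 0)
                 + (if u!i=-1 \<and> u!Suc i=0 then c else 0))"
  define Id where "Id = (if u!(n-1) = 1 then F a b c d e (u[n-1:=-1])*d else 0)"
  define Ie where "Ie = (if u!0 = -1 then F a b c d e (u[0:=1])*e else 0)"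
  define Od where "Od = (if u!(n-1) = -1 then d else 0)"
  define Oe where "Oe = (if u!0 = 1 then e else 0)"
  define Fu where "Fu = F a b c d e u"
  have "(\<Sum>i<n-1. INb i) - Fu * (\<Sum>i<n-1. OUTb i) = (\<Sum>i<n-1. INb i - Fu * OUTb i)"
    by (simp add: sum_subtractf sum_distrib_left)
  also have "\<dots> = (\<Sum>i<n-1. g i - g (Suc i))"
    by (rule sum.cong) (use bi in \<open>simp_all add: INb_def OUTb_def Fu_def\<close>)
  also have "\<dots> = g 0 - g (n-1)" by (rule sum_lessThan_telescope')
  finally have A: "(\<Sum>i<n-1. INb i) - Fu * (\<Sum>i<n-1. OUTb i) = g 0 - g (n-1)" .
  have B: "Ie - Fu * Oe = - g 0" using be by (simp add: Ie_def Oe_def Fu_def)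
  have C: "Id - Fu * Od = g (n-1)" using bd by (simp add: Id_def Od_def Fu_def)
  have "((\<Sum>i<n-1. INb i) + Id + Ie) - Fu * ((\<Sum>i<n-1. OUTb i) + Od + Oe)
     = ((\<Sum>i<n-1. INb i) - Fu * (\<Sum>i<n-1. OUTb i)) + (Id - Fu * Od) + (Ie - Fu * Oe)"
    by (simp add: algebra_simps)
  also have "\<dots> = 0" using A B C by simp
  finally have "((\<Sum>i<n-1. INb i) + Id + Ie) = Fu * ((\<Sum>i<n-1. OUTb i) + Od + Oe)" by simp
  then show ?thesis by (simp only: INb_def OUTb_def Id_def Ie_def Od_def Oe_def Fu_def)
qed

end

lemma mem_swap:
  assumes "u \<in> states n t" "Suc i < n" "u!i = p" "u!Suc i = q" "p \<noteq> q"
  shows "u[i:=q, Suc i:=p] \<in> states n t - {u}"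
proof -
  have "u[i:=q, Suc i:=p] = u[i := u!Suc i, Suc i := u!i]" using assms by simp
  then have "u[i:=q, Suc i:=p] \<in> states n t" using states_swap[OF assms(1,2)] by simp
  moreover have "u[i:=q, Suc i:=p] \<noteq> u"
  proof
    assume "u[i:=q, Suc i:=p] = u"
    then have "u[i:=q, Suc i:=p] ! i = u ! i" by simp
    then show False using assms by (auto simp: states_def)
  qed
  ultimately show ?thesis by simp
qed

lemma mem_flip:
  assumes "u \<in> states n t" "j < n" "u!j = p" "p \<noteq> 0" "x \<in> {-1,1}" "x \<noteq> p"
  shows "u[j:=x] \<in> states n t - {u}"
proof -
  have "u[j:=x] \<in> states n t" using states_upd1[OF assms(1,2)] assms by auto
  moreover have "u[j:=x] \<noteq> u"
  proof
    assume "u[j:=x] = u"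
    then have "u[j:=x] ! j = u ! j" by simp
    then show False using assms by (auto simp: states_def)
  qed
  ultimately show ?thesis by simp
qed

lemma sdc1:
  fixes r :: real
  assumes "finite A" "\<And>v. v \<in> A \<Longrightarrow> C v \<longleftrightarrow> (P \<and> v = w)" "P \<Longrightarrow> w \<in> A"
  shows "(\<Sum>v\<in>A. (if C v then r else 0)) = (if P then r else 0)"
proof -
  have "(\<Sum>v\<in>A. (if C v then r else 0)) = (\<Sum>v\<in>A. (if P \<and> v = w then r else 0))"
    using assms(2) by (intro sum.cong) auto
  then show ?thesis using sum_delta_cond1[of A P w r] assms by simp
qed

lemma sdc:
  fixes r :: real and f :: "'a \<Rightarrow> real"
  assumes "finite A" "\<And>v. v \<in> A \<Longrightarrow> C v \<longleftrightarrow> (P \<and> v = w)" "P \<Longrightarrow> w \<in> A"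
  shows "(\<Sum>v\<in>A. f v * (if C v then r else 0)) = (if P then f w * r else 0)"
proof -
  have "(\<Sum>v\<in>A. f v * (if C v then r else 0)) = (\<Sum>v\<in>A. f v * (if P \<and> v = w then r else 0))"
    using assms(2) by (intro sum.cong) auto
  then show ?thesis using sum_delta_cond[of A P w f r] assms by simp
qed

lemma outflow:
  assumes u: "u \<in> states n t" and n1: "1 \<le> n"
  shows "(\<Sum>v\<in>states n t - {u}. rate a b c d e u v) =
         (\<Sum>i<n-1. (if u!i=0 \<and> u!Suc i=1 then a else 0)
                 + (if u!i=-1 \<and> u!Suc i=1 then b else 0)
                 + (if u!i=-1 \<and> u!Suc i=0 then c else 0))
         + (if u!(n-1) = -1 then d else 0)
         + (if u!0 = 1 then e else 0)"
proof -
  define A where "A = states n t - {u}"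
  have fA: "finite A" unfolding A_def using finite_states by simp
  have lu: "length u = n" using u by (simp add: states_def)
  have r: "\<And>v. rate a b c d e u v = (\<Sum>i<n - 1.
        (if u ! i = 0 \<and> u ! Suc i = 1 \<and> v = u[i := 1, Suc i := 0] then a else 0)
      + (if u ! i = -1 \<and> u ! Suc i = 1 \<and> v = u[i := 1, Suc i := -1] then b else 0)
      + (if u ! i = -1 \<and> u ! Suc i = 0 \<and> v = u[i := 0, Suc i := -1] then c else 0))
    + (if u ! (n - 1) = -1 \<and> v = u[n - 1 := 1] then d else 0)
    + (if u ! 0 = 1 \<and> v = u[0 := -1] then e else 0)"
    using rate_alt[OF lu n1] by blast
  have i1: "(\<Sum>v\<in>A. (if u ! i = 0 \<and> u ! Suc i = 1 \<and> v = u[i := 1, Suc i := 0] then a else 0)) = (if u!i=0 \<and> u!Suc i=1 then a else 0)"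
    if "i \<in> {..<n - 1}" for i
    by (rule sdc1[OF fA]) (use mem_swap[OF u] that A_def in force)+
  have i2: "(\<Sum>v\<in>A. (if u ! i = -1 \<and> u ! Suc i = 1 \<and> v = u[i := 1, Suc i := -1] then b else 0)) = (if u!i=-1 \<and> u!Suc i=1 then b else 0)"
    if "i \<in> {..<n - 1}" for i
    by (rule sdc1[OF fA]) (use mem_swap[OF u] that A_def in force)+
  have i3: "(\<Sum>v\<in>A. (if u ! i = -1 \<and> u ! Suc i = 0 \<and> v = u[i := 0, Suc i := -1] then c else 0)) = (if u!i=-1 \<and> u!Suc i=0 then c else 0)"
    if "i \<in> {..<n - 1}" for i
    by (rule sdc1[OF fA]) (use mem_swap[OF u] that A_def in force)+
  have id: "(\<Sum>v\<in>A. if u ! (n - 1) = -1 \<and> v = u[n - 1 := 1] then d else 0) = (if u!(n-1) = -1 then d else 0)"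
    by (rule sdc1[OF fA]) (use mem_flip[OF u] n1 A_def in force)+
  have ie: "(\<Sum>v\<in>A. if u ! 0 = 1 \<and> v = u[0 := -1] then e else 0) = (if u!0 = 1 then e else 0)"
    by (rule sdc1[OF fA]) (use mem_flip[OF u] n1 A_def in force)+
  have "(\<Sum>v\<in>A. rate a b c d e u v) =
     (\<Sum>i<n-1. \<Sum>v\<in>A. (if u ! i = 0 \<and> u ! Suc i = 1 \<and> v = u[i := 1, Suc i := 0] then a else 0))
     + (\<Sum>i<n-1. \<Sum>v\<in>A. (if u ! i = -1 \<and> u ! Suc i = 1 \<and> v = u[i := 1, Suc i := -1] then b else 0))
     + (\<Sum>i<n-1. \<Sum>v\<in>A. (if u ! i = -1 \<and> u ! Suc i = 0 \<and> v = u[i := 0, Suc i := -1] then c else 0))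
     + (\<Sum>v\<in>A. if u ! (n - 1) = -1 \<and> v = u[n - 1 := 1] then d else 0)
     + (\<Sum>v\<in>A. if u ! 0 = 1 \<and> v = u[0 := -1] then e else 0)"
    unfolding r sum.distrib by (simp only: sum.swap[of _ A "{..<n-1}"])
  also have "\<dots> = (\<Sum>i<n-1. (if u!i=0 \<and> u!Suc i=1 then a else 0))
                 + (\<Sum>i<n-1. (if u!i=-1 \<and> u!Suc i=1 then b else 0))
                 + (\<Sum>i<n-1. (if u!i=-1 \<and> u!Suc i=0 then c else 0))
         + (if u!(n-1) = -1 then d else 0)
         + (if u!0 = 1 then e else 0)"
    by (simp only: sum.cong[OF refl i1] sum.cong[OF refl i2] sum.cong[OF refl i3] id ie)
  also have "\<dots> = (\<Sum>i<n-1. (if u!i=0 \<and> u!Suc i=1 then a else 0)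
                 + (if u!i=-1 \<and> u!Suc i=1 then b else 0)
                 + (if u!i=-1 \<and> u!Suc i=0 then c else 0))
         + (if u!(n-1) = -1 then d else 0)
         + (if u!0 = 1 then e else 0)"
    by (simp only: sum.distrib)
  finally show ?thesis unfolding A_def .
qed


lemma inflow:
  assumes u: "u \<in> states n t" and n1: "1 \<le> n"
  shows "(\<Sum>v\<in>states n t - {u}. F a b c d e v * rate a b c d e v u) =
         (\<Sum>i<n-1. (if u!i=1 \<and> u!Suc i=0 then F a b c d e (u[i:=0,Suc i:=1])*a else 0)
                 + (if u!i=1 \<and> u!Suc i=-1 then F a b c d e (u[i:=-1,Suc i:=1])*b else 0)
                 + (if u!i=0 \<and> u!Suc i=-1 then F a b c d e (u[i:=-1,Suc i:=0])*c else 0))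
         + (if u!(n-1) = 1 then F a b c d e (u[n-1:=-1])*d else 0)
         + (if u!0 = -1 then F a b c d e (u[0:=1])*e else 0)"
proof -
  define A where "A = states n t - {u}"
  define Fx where "Fx = F a b c d e"
  have fA: "finite A" unfolding A_def using finite_states by simp
  have lu: "length u = n" using u by (simp add: states_def)
  have lA: "\<And>v. v \<in> A \<Longrightarrow> length v = n" by (simp add: A_def states_def)
  have rv: "Fx v * rate a b c d e v u =
      (\<Sum>i<n-1. Fx v * (if v ! i = 0 \<and> v ! Suc i = 1 \<and> u = v[i := 1, Suc i := 0] then a else 0))
    + (\<Sum>i<n-1. Fx v * (if v ! i = -1 \<and> v ! Suc i = 1 \<and> u = v[i := 1, Suc i := -1] then b else 0))
    + (\<Sum>i<n-1. Fx v * (if v ! i = -1 \<and> v ! Suc i = 0 \<and> u = v[i := 0, Suc i := -1] then c else 0))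
    + Fx v * (if v ! (n - 1) = -1 \<and> u = v[n - 1 := 1] then d else 0)
    + Fx v * (if v ! 0 = 1 \<and> u = v[0 := -1] then e else 0)" if "v \<in> A" for v
    unfolding rate_alt[OF lA[OF that] n1] by (simp only: distrib_left sum_distrib_left sum.distrib)
  have i1: "(\<Sum>v\<in>A. Fx v * (if v ! i = 0 \<and> v ! Suc i = 1 \<and> u = v[i := 1, Suc i := 0] then a else 0))
     = (if u!i=1 \<and> u!Suc i=0 then Fx (u[i:=0,Suc i:=1])*a else 0)" if "i \<in> {..<n - 1}" for i
  proof (rule sdc[OF fA])
    fix v assume "v \<in> A"
    then show "(v ! i = 0 \<and> v ! Suc i = 1 \<and> u = v[i := 1, Suc i := 0]) = ((u!i=1 \<and> u!Suc i=0) \<and> v = u[i:=0,Suc i:=1])"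
      using iff2[of v u i 0 1 1 0] lA lu that by auto
  qed (use mem_swap[OF u] that A_def in force)
  have i2: "(\<Sum>v\<in>A. Fx v * (if v ! i = -1 \<and> v ! Suc i = 1 \<and> u = v[i := 1, Suc i := -1] then b else 0))
     = (if u!i=1 \<and> u!Suc i=-1 then Fx (u[i:=-1,Suc i:=1])*b else 0)" if "i \<in> {..<n - 1}" for i
  proof (rule sdc[OF fA])
    fix v assume "v \<in> A"
    then show "(v ! i = -1 \<and> v ! Suc i = 1 \<and> u = v[i := 1, Suc i := -1]) = ((u!i=1 \<and> u!Suc i=-1) \<and> v = u[i:=-1,Suc i:=1])"
      using iff2[of v u i "-1" 1 1 "-1"] lA lu that by auto
  qed (use mem_swap[OF u] that A_def in force)
  have i3: "(\<Sum>v\<in>A. Fx v * (if v ! i = -1 \<and> v ! Suc i = 0 \<and> u = v[i := 0, Suc i := -1] then c else 0))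
     = (if u!i=0 \<and> u!Suc i=-1 then Fx (u[i:=-1,Suc i:=0])*c else 0)" if "i \<in> {..<n - 1}" for i
  proof (rule sdc[OF fA])
    fix v assume "v \<in> A"
    then show "(v ! i = -1 \<and> v ! Suc i = 0 \<and> u = v[i := 0, Suc i := -1]) = ((u!i=0 \<and> u!Suc i=-1) \<and> v = u[i:=-1,Suc i:=0])"
      using iff2[of v u i "-1" 0 0 "-1"] lA lu that by auto
  qed (use mem_swap[OF u] that A_def in force)
  have id: "(\<Sum>v\<in>A. Fx v * (if v ! (n - 1) = -1 \<and> u = v[n - 1 := 1] then d else 0))
      = (if u!(n-1) = 1 then Fx (u[n-1:=-1])*d else 0)"
  proof (rule sdc[OF fA])
    fix v assume "v \<in> A"
    then show "(v ! (n - 1) = -1 \<and> u = v[n - 1 := 1]) = (u!(n-1) = 1 \<and> v = u[n-1:=-1])"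
      using iff1[of v u "n-1" "-1" 1] lA lu n1 by auto
  qed (use mem_flip[OF u] n1 A_def in force)
  have ie: "(\<Sum>v\<in>A. Fx v * (if v ! 0 = 1 \<and> u = v[0 := -1] then e else 0))
      = (if u!0 = -1 then Fx (u[0:=1])*e else 0)"
  proof (rule sdc[OF fA])
    fix v assume "v \<in> A"
    then show "(v ! 0 = 1 \<and> u = v[0 := -1]) = (u!0 = -1 \<and> v = u[0:=1])"
      using iff1[of v u 0 1 "-1"] lA lu n1 by auto
  qed (use mem_flip[OF u] n1 A_def in force)
  have "(\<Sum>v\<in>A. Fx v * rate a b c d e v u) =
      (\<Sum>v\<in>A. (\<Sum>i<n-1. Fx v * (if v ! i = 0 \<and> v ! Suc i = 1 \<and> u = v[i := 1, Suc i := 0] then a else 0))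
    + (\<Sum>i<n-1. Fx v * (if v ! i = -1 \<and> v ! Suc i = 1 \<and> u = v[i := 1, Suc i := -1] then b else 0))
    + (\<Sum>i<n-1. Fx v * (if v ! i = -1 \<and> v ! Suc i = 0 \<and> u = v[i := 0, Suc i := -1] then c else 0))
    + Fx v * (if v ! (n - 1) = -1 \<and> u = v[n - 1 := 1] then d else 0)
    + Fx v * (if v ! 0 = 1 \<and> u = v[0 := -1] then e else 0))"
    by (rule sum.cong[OF refl]) (rule rv)
  also have "\<dots> = (\<Sum>i<n-1. \<Sum>v\<in>A. Fx v * (if v ! i = 0 \<and> v ! Suc i = 1 \<and> u = v[i := 1, Suc i := 0] then a else 0))
    + (\<Sum>i<n-1. \<Sum>v\<in>A. Fx v * (if v ! i = -1 \<and> v ! Suc i = 1 \<and> u = v[i := 1, Suc i := -1] then b else 0))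
    + (\<Sum>i<n-1. \<Sum>v\<in>A. Fx v * (if v ! i = -1 \<and> v ! Suc i = 0 \<and> u = v[i := 0, Suc i := -1] then c else 0))
    + (\<Sum>v\<in>A. Fx v * (if v ! (n - 1) = -1 \<and> u = v[n - 1 := 1] then d else 0))
    + (\<Sum>v\<in>A. Fx v * (if v ! 0 = 1 \<and> u = v[0 := -1] then e else 0))"
    by (simp only: sum.distrib sum.swap[of _ A "{..<n-1}"])
  also have "\<dots> = (\<Sum>i<n-1. (if u!i=1 \<and> u!Suc i=0 then Fx (u[i:=0,Suc i:=1])*a else 0))
                 + (\<Sum>i<n-1. (if u!i=1 \<and> u!Suc i=-1 then Fx (u[i:=-1,Suc i:=1])*b else 0))
                 + (\<Sum>i<n-1. (if u!i=0 \<and> u!Suc i=-1 then Fx (u[i:=-1,Suc i:=0])*c else 0))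
         + (if u!(n-1) = 1 then Fx (u[n-1:=-1])*d else 0)
         + (if u!0 = -1 then Fx (u[0:=1])*e else 0)"
    by (simp only: sum.cong[OF refl i1] sum.cong[OF refl i2] sum.cong[OF refl i3] id ie)
  finally show ?thesis unfolding A_def Fx_def by (simp only: sum.distrib)
qed

lemma sum_offd:
  assumes "finite M" "u \<in> M"
  shows "(\<Sum>v\<in>M-{u}. g v) = (\<Sum>v\<in>M. if v \<noteq> u then g v else 0)"
proof -
  have "M - {u} = {v\<in>M. v \<noteq> u}" by auto
  then show ?thesis using assms sum.inter_filter[of M g "\<lambda>v. v \<noteq> u"] by simp
qed

lemma offdiag_swap:
  fixes f :: "'a \<Rightarrow> 'a \<Rightarrow> real"
  assumes "finite M"
  shows "(\<Sum>u\<in>M. \<Sum>v\<in>M-{u}. f v u) = (\<Sum>u\<in>M. \<Sum>v\<in>M-{u}. f u v)"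
proof -
  note e = sum_offd[OF assms]
  have "(\<Sum>u\<in>M. \<Sum>v\<in>M-{u}. f v u) = (\<Sum>u\<in>M. \<Sum>v\<in>M. if v \<noteq> u then f v u else 0)"
    by (rule sum.cong[OF refl]) (rule e)
  also have "\<dots> = (\<Sum>v\<in>M. \<Sum>u\<in>M. if v \<noteq> u then f v u else 0)" by (rule sum.swap)
  also have "\<dots> = (\<Sum>v\<in>M. \<Sum>u\<in>M-{v}. f v u)"
  proof (rule sum.cong[OF refl])
    fix x assume x: "x \<in> M"
    have "(\<Sum>u\<in>M. if x \<noteq> u then f x u else 0) = (\<Sum>u\<in>M. if u \<noteq> x then f x u else 0)"
      by (intro sum.cong) auto
    then show "(\<Sum>u\<in>M. if x \<noteq> u then f x u else 0) = (\<Sum>u\<in>M-{x}. f x u)"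
      using e[OF x, of "f x"] by simp
  qed
  finally show ?thesis .
qed

lemma unique_stationary:
  fixes S :: "'a set" and r :: "'a \<Rightarrow> 'a \<Rightarrow> real" and p q :: "'a \<Rightarrow> real" and \<phi> :: "'a \<Rightarrow> nat"
  assumes fin: "finite S" and qpos: "\<And>u. u \<in> S \<Longrightarrow> q u > 0"
    and rnn: "\<And>u v. u \<in> S \<Longrightarrow> v \<in> S \<Longrightarrow> r u v \<ge> 0"
    and qbal: "\<And>u. u \<in> S \<Longrightarrow> (\<Sum>v\<in>S-{u}. q v * r v u) = q u * (\<Sum>v\<in>S-{u}. r u v)"
    and pnn: "\<And>u. u \<in> S \<Longrightarrow> p u \<ge> 0" and psum: "(\<Sum>u\<in>S. p u) = 1"
    and pbal: "\<And>u. u \<in> S \<Longrightarrow> (\<Sum>v\<in>S-{u}. p v * r v u) = p u * (\<Sum>v\<in>S-{u}. r u v)"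
    and c0: "c0 \<in> S"
    and desc: "\<And>u. u \<in> S \<Longrightarrow> u \<noteq> c0 \<Longrightarrow> \<exists>v\<in>S-{u}. r u v > 0 \<and> \<phi> v < \<phi> u"
  shows "\<forall>u\<in>S. p u = q u / (\<Sum>w\<in>S. q w)"
proof -
  define R where "R = Max ((\<lambda>u. p u / q u) ` S)"
  have Sne: "S \<noteq> {}" using c0 by auto
  have Rge: "p u / q u \<le> R" if "u \<in> S" for u unfolding R_def using fin that by simp
  have pleR: "p u \<le> R * q u" if "u \<in> S" for u
    using Rge[OF that] qpos[OF that] by (simp add: divide_le_eq)
  have "R \<in> (\<lambda>u. p u / q u) ` S" unfolding R_def using fin Sne by (intro Max_in) auto
  then obtain um where um: "um \<in> S" "R = p um / q um" by auto
  have Rpos: "R > 0"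
  proof (rule ccontr)
    assume "\<not> R > 0"
    then have "\<forall>u\<in>S. p u \<le> 0" using pleR qpos by (meson mult_nonpos_nonneg not_less less_imp_le order_trans)
    then have "\<forall>u\<in>S. p u = 0" using pnn by (simp add: order_antisym)
    then show False using psum by simp
  qed
  define M where "M = {u\<in>S. p u = R * q u}"
  have umM: "um \<in> M" using um qpos[OF um(1)] by (simp add: M_def)
  have P1: "v \<in> M" if "u \<in> M" "v \<in> S - {u}" "r v u > 0" for u v
  proof -
    have uS: "u \<in> S" and pu: "p u = R * q u" using that by (auto simp: M_def)
    have "(\<Sum>v\<in>S-{u}. (R * q v - p v) * r v u) = R * (\<Sum>v\<in>S-{u}. q v * r v u) - (\<Sum>v\<in>S-{u}. p v * r v u)"
      by (simp add: algebra_simps sum_subtractf sum_distrib_left)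
    also have "\<dots> = 0" using qbal[OF uS] pbal[OF uS] pu by simp
    finally have z: "(\<Sum>v\<in>S-{u}. (R * q v - p v) * r v u) = 0" .
    have nn: "\<forall>v\<in>S-{u}. (R * q v - p v) * r v u \<ge> 0" using pleR rnn uS by simp
    have "\<forall>w\<in>S-{u}. (R * q w - p w) * r w u = 0"
      using sum_nonneg_eq_0_iff[of "S-{u}" "\<lambda>w. (R * q w - p w) * r w u"] z nn fin by auto
    then have "(R * q v - p v) * r v u = 0" using that(2) by blast
    then show ?thesis using that(2,3) by (simp add: M_def)
  qed
  have P2: "v \<in> M" if "u \<in> M" "v \<in> S - {u}" "r u v > 0" for u v
  proof (rule ccontr)
    assume vM: "v \<notin> M"
    have MS: "M \<subseteq> S" by (auto simp: M_def)
    have fM: "finite M" using fin MS finite_subset by auto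
    have inM: "(\<Sum>w\<in>S-{x}. p w * r w x) = (\<Sum>w\<in>M-{x}. p w * r w x)" if "x \<in> M" for x
    proof (rule sum.mono_neutral_right)
      show "finite (S - {x})" using fin by simp
      show "M - {x} \<subseteq> S - {x}" using MS by auto
      show "\<forall>w\<in>S - {x} - (M - {x}). p w * r w x = 0"
      proof
        fix w assume w: "w \<in> S - {x} - (M - {x})"
        have wS: "w \<in> S - {x}" "w \<notin> M" using w by auto
        have "\<not> r w x > 0"
        proof
          assume "r w x > 0"
          then have "w \<in> M" using P1[OF that wS(1)] by blast
          with wS(2) show False by simp
        qed
        then have "r w x = 0" using rnn[of w x] w that MS by auto
        then show "p w * r w x = 0" by simp
      qed
    qed
    have outsplit: "(\<Sum>w\<in>S-{x}. r x w) = (\<Sum>w\<in>M-{x}. r x w) + (\<Sum>w\<in>S-M. r x w)" if "x \<in> M" for x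
    proof -
      have "S - {x} = (M - {x}) \<union> (S - M)" using that MS by auto
      moreover have "finite (M-{x})" "finite (S-M)" "(M-{x}) \<inter> (S-M) = {}" using fin fM by auto
      ultimately show ?thesis using sum.union_disjoint[of "M-{x}" "S-M" "\<lambda>w. r x w"] by simp
    qed
    have "(\<Sum>x\<in>M. \<Sum>w\<in>M-{x}. p w * r w x) = (\<Sum>x\<in>M. \<Sum>w\<in>S-{x}. p w * r w x)"
      by (rule sum.cong[OF refl]) (rule inM[symmetric])
    also have "\<dots> = (\<Sum>x\<in>M. p x * (\<Sum>w\<in>S-{x}. r x w))"
      by (rule sum.cong[OF refl]) (use pbal MS in blast)
    also have "\<dots> = (\<Sum>x\<in>M. (\<Sum>w\<in>M-{x}. p x * r x w) + (\<Sum>w\<in>S-M. p x * r x w))"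
      by (rule sum.cong[OF refl]) (simp only: outsplit distrib_left sum_distrib_left)
    also have "\<dots> = (\<Sum>x\<in>M. \<Sum>w\<in>M-{x}. p x * r x w) + (\<Sum>x\<in>M. \<Sum>w\<in>S-M. p x * r x w)"
      by (rule sum.distrib)
    finally have "(\<Sum>x\<in>M. \<Sum>w\<in>S-M. p x * r x w) = 0" using offdiag_swap[OF fM, of "\<lambda>w x. p w * r w x"] by simp
    moreover have "\<forall>x\<in>M. \<forall>w\<in>S-M. p x * r x w \<ge> 0" using pnn rnn MS by auto
    ultimately have "\<forall>x\<in>M. (\<Sum>w\<in>S-M. p x * r x w) = 0"
    proof -
      have nn2: "\<And>x. x\<in>M \<Longrightarrow> 0 \<le> (\<Sum>w\<in>S-M. p x * r x w)"
        by (rule sum_nonneg) (use \<open>\<forall>x\<in>M. \<forall>w\<in>S-M. p x * r x w \<ge> 0\<close> in blast)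
      show ?thesis using sum_nonneg_eq_0_iff[of M "\<lambda>x. \<Sum>w\<in>S-M. p x * r x w"] fM nn2
        \<open>(\<Sum>x\<in>M. \<Sum>w\<in>S-M. p x * r x w) = 0\<close> by blast
    qed
    then have "(\<Sum>w\<in>S-M. p u * r u w) = 0" using that(1) by blast
    moreover have "\<And>w. w \<in> S-M \<Longrightarrow> 0 \<le> p u * r u w" using pnn rnn MS that(1) by auto
    moreover have vSM: "v \<in> S - M" using that(2) vM by auto
    ultimately have "p u * r u v = 0"
      using sum_nonneg_eq_0_iff[of "S-M" "\<lambda>w. p u * r u w"] fin by blast
    moreover have "p u > 0" using that(1) Rpos qpos by (auto simp: M_def)
    ultimately show False using that(3) by simp
  qed
  have all: "u \<in> M \<longleftrightarrow> c0 \<in> M" if "u \<in> S" for u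
    using that
  proof (induction "\<phi> u" arbitrary: u rule: less_induct)
    case less
    show ?case
    proof (cases "u = c0")
      case False
      then obtain v where v: "v \<in> S - {u}" "r u v > 0" "\<phi> v < \<phi> u" using desc less.prems by blast
      have "u \<in> M \<longleftrightarrow> v \<in> M"
        using P2[OF _ v(1,2)] P1[of v u] v less.prems by auto
      then show ?thesis using less.hyps[OF v(3)] v(1) by auto
    qed simp
  qed
  have pR: "p u = R * q u" if "u \<in> S" for u using all[OF that] all[OF um(1)] umM that by (simp add: M_def)
  have "1 = R * (\<Sum>w\<in>S. q w)" using psum pR by (simp add: sum_distrib_left)
  moreover have "(\<Sum>w\<in>S. q w) > 0" using sum_pos[OF fin Sne] qpos by auto
  ultimately have "R = 1 / (\<Sum>w\<in>S. q w)" by (simp add: field_simps)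
  then show ?thesis using pR by simp
qed

definition hp :: "nat \<Rightarrow> int \<Rightarrow> nat \<Rightarrow> int" where
  "hp n x j = (if x = 1 then int j else if x = -1 then 2 * int n - int j else 0)"

definition pot :: "int list \<Rightarrow> int" where
  "pot u = (\<Sum>j<length u. hp (length u) (u!j) j)"

lemma pot_nonneg: "0 \<le> pot u"
  unfolding pot_def hp_def by (intro sum_nonneg) auto

lemma sum_upd:
  fixes g :: "int \<Rightarrow> nat \<Rightarrow> int"
  assumes "k < length xs"
  shows "(\<Sum>j<length xs. g (xs[k:=x] ! j) j) = (\<Sum>j<length xs. g (xs!j) j) - g (xs!k) k + g x k"
proof -
  have fin: "finite {..<length xs}" by simp
  have k: "k \<in> {..<length xs}" using assms by simp
  have 1: "(\<Sum>j<length xs. g (xs[k:=x] ! j) j) = g (xs[k:=x] ! k) k + (\<Sum>j\<in>{..<length xs}-{k}. g (xs[k:=x] ! j) j)"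
    by (rule sum.remove[OF fin k])
  have 2: "(\<Sum>j\<in>{..<length xs}-{k}. g (xs[k:=x] ! j) j) = (\<Sum>j\<in>{..<length xs}-{k}. g (xs ! j) j)"
    by (intro sum.cong) auto
  have 3: "(\<Sum>j<length xs. g (xs!j) j) = g (xs!k) k + (\<Sum>j\<in>{..<length xs}-{k}. g (xs ! j) j)"
    by (rule sum.remove[OF fin k])
  have "xs[k:=x] ! k = x" using assms by simp
  then show ?thesis using 1 2 3 by simp
qed

lemma pot_upd: "k < length u \<Longrightarrow> pot (u[k:=x]) = pot u - hp (length u) (u!k) k + hp (length u) x k"
  unfolding pot_def using sum_upd[of k u "hp (length u)" x] by simp

lemma pot_swap:
  assumes "Suc i < length u" "(u!i, u!Suc i) \<in> {(0,1),(-1,1),(-1,0)}"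
  shows "pot (u[i:=u!Suc i, Suc i:=u!i]) < pot u"
proof -
  have "pot (u[i:=u!Suc i, Suc i:=u!i]) = pot u - hp (length u) (u!i) i + hp (length u) (u!Suc i) i
      - hp (length u) (u!Suc i) (Suc i) + hp (length u) (u!i) (Suc i)"
    using pot_upd[of "Suc i" "u[i:=u!Suc i]" "u!i"] pot_upd[of i u "u!Suc i"] assms by simp
  then show ?thesis using assms by (auto simp: hp_def)
qed

lemma pot_flip:
  assumes "length u = n" "1 \<le> n" "u!(n-1) = -1"
  shows "pot (u[n-1:=1]) < pot u"
proof -
  have "pot (u[n-1:=1]) = pot u - hp n (u!(n-1)) (n-1) + hp n 1 (n-1)"
    using pot_upd[of "n-1" u 1] assms by simp
  then show ?thesis using assms by (auto simp: hp_def of_nat_diff)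
qed

context fixes a b c d e :: real
  assumes pos: "0 < a" "0 < b" "0 < c" "0 < d" "0 < e"
begin

lemma rate_nonneg: "rate a b c d e u v \<ge> 0"
  unfolding rate_def using pos by (intro add_nonneg_nonneg sum_nonneg) auto

lemma rate_swap_pos:
  assumes lu: "length u = n" and n1: "1 \<le> n" and si: "Suc i < n"
    and pr: "(u!i, u!Suc i) \<in> {(0,1),(-1,1),(-1,0)}"
  shows "rate a b c d e u (u[i:=u!Suc i, Suc i:=u!i]) > 0"
proof -
  define v where "v = u[i:=u!Suc i, Suc i:=u!i]"
  define f where "f = (\<lambda>i. (if u ! i = 0 \<and> u ! Suc i = 1 \<and> v = u[i := 1, Suc i := 0] then a else 0)
      + (if u ! i = -1 \<and> u ! Suc i = 1 \<and> v = u[i := 1, Suc i := -1] then b else 0)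
      + (if u ! i = -1 \<and> u ! Suc i = 0 \<and> v = u[i := 0, Suc i := -1] then c else 0))"
  have r: "rate a b c d e u v = (\<Sum>i<n-1. f i)
    + (if u ! (n - 1) = -1 \<and> v = u[n - 1 := 1] then d else 0)
    + (if u ! 0 = 1 \<and> v = u[0 := -1] then e else 0)"
    unfolding f_def by (rule rate_alt[OF lu n1])
  have fnn: "\<And>j. 0 \<le> f j" unfolding f_def using pos by auto
  have fi: "f i > 0" unfolding f_def v_def using pr pos by auto
  have "f i \<le> (\<Sum>i<n-1. f i)" using si fnn by (intro member_le_sum) auto
  then have "(\<Sum>i<n-1. f i) > 0" using fi by simp
  then show ?thesis unfolding v_def[symmetric] r using pos by auto
qed

lemma rate_flip_pos:
  assumes lu: "length u = n" and n1: "1 \<le> n" and l: "u!(n-1) = -1"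
  shows "rate a b c d e u (u[n-1:=1]) > 0"
proof -
  define v where "v = u[n-1:=1]"
  define f where "f = (\<lambda>i. (if u ! i = 0 \<and> u ! Suc i = 1 \<and> v = u[i := 1, Suc i := 0] then a else 0)
      + (if u ! i = -1 \<and> u ! Suc i = 1 \<and> v = u[i := 1, Suc i := -1] then b else 0)
      + (if u ! i = -1 \<and> u ! Suc i = 0 \<and> v = u[i := 0, Suc i := -1] then c else 0))"
  have r: "rate a b c d e u v = (\<Sum>i<n-1. f i)
    + (if u ! (n - 1) = -1 \<and> v = u[n - 1 := 1] then d else 0)
    + (if u ! 0 = 1 \<and> v = u[0 := -1] then e else 0)"
    unfolding f_def by (rule rate_alt[OF lu n1])
  have fnn: "\<And>j. 0 \<le> f j" unfolding f_def using pos by auto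
  have "(\<Sum>i<n-1. f i) \<ge> 0" using fnn by (simp add: sum_nonneg)
  then show ?thesis unfolding v_def[symmetric] r using pos l v_def by auto
qed

end

context fixes a b c d e :: real
  assumes pos: "0 < a" "0 < b" "0 < c" "0 < d" "0 < e"
begin

lemma desc:
  assumes u: "u \<in> states n t" and n1: "1 \<le> n" and nc: "u \<noteq> replicate t 1 @ replicate (n-t) 0"
  shows "\<exists>v\<in>states n t - {u}. rate a b c d e u v > 0 \<and> nat (pot v) < nat (pot u)"
proof -
  have lu: "length u = n" and su: "set u \<subseteq> {-1,0,1}" and cu: "length (filter (\<lambda>x. x \<noteq> 0) u) = t"
    using u by (auto simp: states_def)
  show ?thesis
  proof (cases "\<exists>i. red_pos u i")
    case True
    then obtain i where rp: "red_pos u i" by blast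
    then have si: "Suc i < n" and pr: "(u!i, u!Suc i) \<in> {(0,1),(-1,1),(-1,0)}"
      using lu by (auto simp: red_pos_def)
    have ne: "u!i \<noteq> u!Suc i" using pr by auto
    have m: "u[i:=u!Suc i, Suc i:=u!i] \<in> states n t - {u}" using mem_swap[OF u si refl refl ne] .
    have "pot (u[i:=u!Suc i, Suc i:=u!i]) < pot u" using pot_swap pr si lu by simp
    then have "nat (pot (u[i:=u!Suc i, Suc i:=u!i])) < nat (pot u)" using pot_nonneg by (metis nat_less_eq_zless)
    then show ?thesis using m rate_swap_pos[OF pos lu n1 si pr] by blast
  next
    case nored: False
    show ?thesis
    proof (cases "last u = -1")
      case True
      have ne: "u \<noteq> []" using lu n1 by auto
      then have l: "u!(n-1) = -1" using True lu by (simp add: last_conv_nth)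
      have m: "u[n-1:=1] \<in> states n t - {u}" using mem_flip[OF u, of "n-1" "-1" 1] l n1 by simp
      have "pot (u[n-1:=1]) < pot u" using pot_flip[OF lu n1 l] .
      then have "nat (pot (u[n-1:=1])) < nat (pot u)" using pot_nonneg by (metis nat_less_eq_zless)
      then show ?thesis using m rate_flip_pos[OF pos lu n1 l] by blast
    next
      case False
      obtain k m where km: "u = replicate k 1 @ replicate m 0"
        using no_red_form[OF su nored] False by auto
      have "k = t" using cu km by simp
      moreover have "k + m = n" using lu km by simp
      ultimately have "u = replicate t 1 @ replicate (n-t) 0" using km by auto
      then show ?thesis using nc by simp
    qed
  qed
qed

lemma F_bal:
  assumes u: "u \<in> states n t" and n1: "1 \<le> n"
  shows "(\<Sum>v\<in>states n t - {u}. F a b c d e v * rate a b c d e v u) = F a b c d e u * (\<Sum>v\<in>states n t - {u}. rate a b c d e u v)"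
  unfolding inflow[OF u n1] outflow[OF u n1] using balance_F[OF pos u n1] by simp

end

theorem theorem2:
  fixes n t :: nat and a b c d e :: real and p :: "int list \<Rightarrow> real"
  assumes "n \<ge> 2" and "1 \<le> t" and "t \<le> n - 1"
    and "a > 0" and "b > 0" and "c > 0" and "d > 0" and "e > 0"
  shows "stationary (states n t) (rate a b c d e) p \<longleftrightarrow>
    (\<forall>u\<in>states n t. p u = bracket a b c d e u / (\<Sum>w\<in>states n t. bracket a b c d e w))"
proof -
  note pos = assms(4-8)
  define S where "S = states n t"
  have n1: "1 \<le> n" using assms by simp
  have fin: "finite S" unfolding S_def by (rule finite_states)
  have brS: "\<And>u. u \<in> S \<Longrightarrow> bracket a b c d e u = F a b c d e u"
    using bracket_F[OF pos] by (auto simp: S_def states_def)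
  have sumeq: "(\<Sum>w\<in>S. bracket a b c d e w) = (\<Sum>w\<in>S. F a b c d e w)" using brS by (rule sum.cong[OF refl])
  define c0 where "c0 = replicate t (1::int) @ replicate (n-t) 0"
  have c0S: "c0 \<in> S" unfolding c0_def S_def states_def using assms by auto
  have Fpos: "\<And>u. F a b c d e u > 0" using F_pos pos by blast
  have Zpos: "(\<Sum>w\<in>S. F a b c d e w) > 0" using sum_pos[OF fin] c0S Fpos by blast
  have rhs: "(\<forall>u\<in>S. p u = bracket a b c d e u / (\<Sum>w\<in>S. bracket a b c d e w)) \<longleftrightarrow>
             (\<forall>u\<in>S. p u = F a b c d e u / (\<Sum>w\<in>S. F a b c d e w))"
    using brS sumeq by auto
  show ?thesis
    unfolding S_def[symmetric] rhs
  proof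
    assume st: "stationary S (rate a b c d e) p"
    show "\<forall>u\<in>S. p u = F a b c d e u / (\<Sum>w\<in>S. F a b c d e w)"
    proof (rule unique_stationary[where \<phi> = "\<lambda>u. nat (pot u)" and ?c0.0 = c0])
      show "finite S" by (rule fin)
      show "\<And>u. u \<in> S \<Longrightarrow> F a b c d e u > 0" using Fpos by blast
      show "\<And>u v. 0 \<le> rate a b c d e u v" using rate_nonneg[OF pos] by blast
      show "\<And>u. u \<in> S \<Longrightarrow> (\<Sum>v\<in>S-{u}. F a b c d e v * rate a b c d e v u) = F a b c d e u * (\<Sum>v\<in>S-{u}. rate a b c d e u v)"
        unfolding S_def using F_bal[OF pos _ n1] by blast
      show "\<And>u. u \<in> S \<Longrightarrow> p u \<ge> 0" "(\<Sum>u\<in>S. p u) = 1"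
        "\<And>u. u \<in> S \<Longrightarrow> (\<Sum>v\<in>S-{u}. p v * rate a b c d e v u) = p u * (\<Sum>v\<in>S-{u}. rate a b c d e u v)"
        using st unfolding stationary_def by auto
      show "c0 \<in> S" by (rule c0S)
      show "\<And>u. u \<in> S \<Longrightarrow> u \<noteq> c0 \<Longrightarrow> \<exists>v\<in>S-{u}. rate a b c d e u v > 0 \<and> nat (pot v) < nat (pot u)"
        unfolding S_def c0_def using desc[OF pos _ n1] by blast
    qed
  next
    assume h: "\<forall>u\<in>S. p u = F a b c d e u / (\<Sum>w\<in>S. F a b c d e w)"
    define Z where "Z = (\<Sum>w\<in>S. F a b c d e w)"
    have Z: "Z > 0" using Zpos Z_def by simp
    have pnn: "\<forall>u\<in>S. p u \<ge> 0" using h Fpos Z Z_def by (simp add: less_imp_le)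
    have psum: "(\<Sum>u\<in>S. p u) = 1"
    proof -
      have "(\<Sum>u\<in>S. p u) = (\<Sum>u\<in>S. F a b c d e u / Z)" using h Z_def by (intro sum.cong) auto
      also have "\<dots> = Z / Z" by (simp only: sum_divide_distrib[symmetric] Z_def)
      finally show ?thesis using Z by simp
    qed
    have pbal: "\<forall>u\<in>S. (\<Sum>v\<in>S-{u}. p v * rate a b c d e v u) = p u * (\<Sum>v\<in>S-{u}. rate a b c d e u v)"
    proof
      fix u assume uS: "u \<in> S"
      have "(\<Sum>v\<in>S-{u}. p v * rate a b c d e v u) = (\<Sum>v\<in>S-{u}. F a b c d e v * rate a b c d e v u) / Z"
        unfolding sum_divide_distrib using h Z_def by (intro sum.cong) auto
      also have "\<dots> = F a b c d e u * (\<Sum>v\<in>S-{u}. rate a b c d e u v) / Z"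
        using F_bal[OF pos _ n1, of u t] uS S_def by simp
      also have "\<dots> = p u * (\<Sum>v\<in>S-{u}. rate a b c d e u v)" using h uS Z_def by simp
      finally show "(\<Sum>v\<in>S-{u}. p v * rate a b c d e v u) = p u * (\<Sum>v\<in>S-{u}. rate a b c d e u v)" .
    qed
    show "stationary S (rate a b c d e) p" unfolding stationary_def using pnn psum pbal by blast
  qed
qed

end
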